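(* Let $L\subseteq\Sigma^\omega$ be a prefix-independent language and let $\mathcal{B}$ be a history-deterministic generalised coBüchi automaton recognising $L$. Let $\mathcal{A}_{\min}$ be a nice, safe minimal and safe centralised history-deterministic coBüchi automaton recognising $L$, with safe components having state sets $S_1,\dots,S_k$, and let $n_{\max}=\max_{1\le i\le k}|S_i|$ (this is the number of states of the automaton $\mathcal{A}_{\mathrm{PI}}$, which has states $\{p_1,\dots,p_{n_{\max}}\}$, all transitions, and for each $i$ makes colour $i$ absent exactly on the image of the transitions of the $i$-th safe component under a fixed injection of $S_i$ into its states). Then $n_{\max}\le$ the number of states of $\mathcal{B}$.
   Context: An automaton is a tuple $(Q,\Sigma,q_{\mathrm{init}},\Delta,\Gamma,\mathrm{col},W)$ with finite state set, finite input alphabet $\Sigma$, initial state, transitions $\Delta\subseteq Q\times\Sigma\times Q$, output alphabet $\Gamma$, labelling $\mathrm{col}:\Delta\to\Gamma$, acceptance condition $W\subseteq\Gamma^\omega$. A run on $w=a_1a_2\cdots$ is a sequence $(q_0,a_1,q_1)(q_1,a_2,q_2)\cdots$ of transitions with $q_0=q_{\mathrm{init}}$, accepting if its label sequence is in $W$; $\mathcal{L}(\mathcal{A})$ is the set of words with an accepting run. With a finite colour set $C$ and $\Gamma=2^C$, generalised coBüchi means $W=\{x : \text{some } c\in C \text{ occurs in only finitely many letters of } x\}$; a coBüchi automaton is the case $C=\{1\}$, its coBüchi transitions being those labelled $\{1\}$. A resolver is a map $\sigma:\Sigma^+\to\Delta$ such that for every $w=a_0a_1\cdots$, $\sigma(a_0)\sigma(a_0a_1)\cdots$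 is a run on $w$, accepting whenever $w\in\mathcal{L}(\mathcal{A})$; history-deterministic means a resolver exists. $L$ is prefix-independent if for all $u\in\Sigma^*$, $w\in\Sigma^\omega$: $uw\in L\iff w\in L$. For a coBüchi automaton: $\mathcal{A}_{\mathrm{safe}}$ is obtained by deleting coBüchi transitions; a safe component is a strongly connected component of $\mathcal{A}_{\mathrm{safe}}$; the safe language of $q$ is the set of words with an infinite path from $q$ in $\mathcal{A}_{\mathrm{safe}}$; two states are equivalent if the automaton started from each recognises the same language. Semantically deterministic: $(q,a,p_1),(q,a,p_2)\in\Delta$ implies $p_1,p_2$ equivalent; normal form: transitions between different safe components are coBüchi transitions; safe deterministic: $\mathcal{A}_{\mathrm{safe}}$ deterministic; nice: all states reachable, semantically deterministic, normal form, safe deterministic. Safe centralised: equivalent states with inclusion-comparable safe languages lie in the same safe component; safe minimal: equivalent states with equal safe languages are equal. *)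

theory Defs
  imports Main
begin

text \<open>Automata over an explicit finite input alphabet Sig. The output alphabet is the type 'g; the labelling col is a
  total function on the transition type, only meaningful on trans.\<close>

record ('q, 'a, 'g) automaton =
  states :: "'q set"
  init   :: 'q
  trans  :: "('q \<times> 'a \<times> 'q) set"
  col    :: "('q \<times> 'a \<times> 'q) \<Rightarrow> 'g"
  acc    :: "(nat \<Rightarrow> 'g) set"

definition is_automaton :: "'a set \<Rightarrow> ('q, 'a, 'g) automaton \<Rightarrow> bool" where
  "is_automaton Sig A \<longleftrightarrow> finite Sig \<and> finite (states A) \<and> init A \<in> states A
     \<and> trans A \<subseteq> states A \<times> Sig \<times> states A"

definition omega_words :: "'a set \<Rightarrow> (nat \<Rightarrow> 'a) set" where
  "omega_words Sig = {w. \<forall>i. w i \<in> Sig}"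

definition is_run :: "('q, 'a, 'g) automaton \<Rightarrow> (nat \<Rightarrow> 'a) \<Rightarrow> (nat \<Rightarrow> 'q \<times> 'a \<times> 'q) \<Rightarrow> bool" where
  "is_run A w r \<longleftrightarrow> fst (r 0) = init A \<and>
     (\<forall>i. r i \<in> trans A \<and> fst (snd (r i)) = w i \<and> snd (snd (r i)) = fst (r (Suc i)))"

definition accepting_run :: "('q, 'a, 'g) automaton \<Rightarrow> (nat \<Rightarrow> 'q \<times> 'a \<times> 'q) \<Rightarrow> bool" where
  "accepting_run A r \<longleftrightarrow> (\<lambda>i. col A (r i)) \<in> acc A"

definition lang :: "'a set \<Rightarrow> ('q, 'a, 'g) automaton \<Rightarrow> (nat \<Rightarrow> 'a) set" where
  "lang Sig A = {w \<in> omega_words Sig. \<exists>r. is_run A w r \<and> accepting_run A r}"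

definition wprefix :: "nat \<Rightarrow> (nat \<Rightarrow> 'a) \<Rightarrow> 'a list" where
  "wprefix n w = map w [0..<n]"

text \<open>Resolver: sigma applied to the nonempty prefixes a_0, a_0 a_1, ...\<close>
definition is_resolver :: "'a set \<Rightarrow> ('q, 'a, 'g) automaton \<Rightarrow> ('a list \<Rightarrow> 'q \<times> 'a \<times> 'q) \<Rightarrow> bool" where
  "is_resolver Sig A \<sigma> \<longleftrightarrow> (\<forall>w \<in> omega_words Sig.
      is_run A w (\<lambda>i. \<sigma> (wprefix (Suc i) w)) \<and>
      (w \<in> lang Sig A \<longrightarrow> accepting_run A (\<lambda>i. \<sigma> (wprefix (Suc i) w))))"

definition history_deterministic :: "'a set \<Rightarrow> ('q, 'a, 'g) automaton \<Rightarrow> bool" where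
  "history_deterministic Sig A \<longleftrightarrow> (\<exists>\<sigma>. is_resolver Sig A \<sigma>)"

definition conc :: "'a list \<Rightarrow> (nat \<Rightarrow> 'a) \<Rightarrow> (nat \<Rightarrow> 'a)" where
  "conc u w = (\<lambda>i. if i < length u then u ! i else w (i - length u))"

definition prefix_independent :: "'a set \<Rightarrow> (nat \<Rightarrow> 'a) set \<Rightarrow> bool" where
  "prefix_independent Sig L \<longleftrightarrow>
     (\<forall>u w. set u \<subseteq> Sig \<longrightarrow> w \<in> omega_words Sig \<longrightarrow> (conc u w \<in> L \<longleftrightarrow> w \<in> L))"

definition gen_cobuchi_cond :: "'c set \<Rightarrow> (nat \<Rightarrow> 'c set) set" where
  "gen_cobuchi_cond C = {x. \<exists>c \<in> C. finite {i. c \<in> x i}}"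

definition is_gen_cobuchi :: "'a set \<Rightarrow> 'c set \<Rightarrow> ('q, 'a, 'c set) automaton \<Rightarrow> bool" where
  "is_gen_cobuchi Sig C A \<longleftrightarrow> is_automaton Sig A \<and> finite C
     \<and> (\<forall>t \<in> trans A. col A t \<subseteq> C) \<and> acc A = gen_cobuchi_cond C"

definition is_cobuchi :: "'a set \<Rightarrow> ('q, 'a, nat set) automaton \<Rightarrow> bool" where
  "is_cobuchi Sig A \<longleftrightarrow> is_gen_cobuchi Sig {1} A"

definition cobuchi_trans :: "('q, 'a, nat set) automaton \<Rightarrow> ('q \<times> 'a \<times> 'q) set" where
  "cobuchi_trans A = {t \<in> trans A. col A t = {1}}"

definition safe_trans :: "('q, 'a, nat set) automaton \<Rightarrow> ('q \<times> 'a \<times> 'q) set" where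
  "safe_trans A = trans A - cobuchi_trans A"

definition safe_edges :: "('q, 'a, nat set) automaton \<Rightarrow> ('q \<times> 'q) set" where
  "safe_edges A = {(p, q). \<exists>a. (p, a, q) \<in> safe_trans A}"

definition safe_scc :: "('q, 'a, nat set) automaton \<Rightarrow> 'q \<Rightarrow> 'q set" where
  "safe_scc A q = {p \<in> states A. (q, p) \<in> (safe_edges A)\<^sup>* \<and> (p, q) \<in> (safe_edges A)\<^sup>*}"

definition safe_components :: "('q, 'a, nat set) automaton \<Rightarrow> 'q set set" where
  "safe_components A = safe_scc A ` states A"

definition safe_lang :: "'a set \<Rightarrow> ('q, 'a, nat set) automaton \<Rightarrow> 'q \<Rightarrow> (nat \<Rightarrow> 'a) set" where
  "safe_lang Sig A q = {w \<in> omega_words Sig. \<exists>qs. qs 0 = q \<and>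
      (\<forall>i. (qs i, w i, qs (Suc i)) \<in> safe_trans A)}"

definition equiv_states :: "'a set \<Rightarrow> ('q, 'a, 'g) automaton \<Rightarrow> 'q \<Rightarrow> 'q \<Rightarrow> bool" where
  "equiv_states Sig A p q \<longleftrightarrow> lang Sig (A\<lparr>init := p\<rparr>) = lang Sig (A\<lparr>init := q\<rparr>)"

definition all_reachable :: "('q, 'a, 'g) automaton \<Rightarrow> bool" where
  "all_reachable A \<longleftrightarrow> (\<forall>q \<in> states A. (init A, q) \<in> {(p, p'). \<exists>a. (p, a, p') \<in> trans A}\<^sup>*)"

definition semantically_deterministic :: "'a set \<Rightarrow> ('q, 'a, 'g) automaton \<Rightarrow> bool" where
  "semantically_deterministic Sig A \<longleftrightarrow>
     (\<forall>q a p1 p2. (q, a, p1) \<in> trans A \<longrightarrow> (q, a, p2) \<in> trans A \<longrightarrow> equiv_states Sig A p1 p2)"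

definition normal_form :: "('q, 'a, nat set) automaton \<Rightarrow> bool" where
  "normal_form A \<longleftrightarrow> (\<forall>p a q. (p, a, q) \<in> trans A \<longrightarrow> safe_scc A p \<noteq> safe_scc A q
      \<longrightarrow> (p, a, q) \<in> cobuchi_trans A)"

definition safe_deterministic :: "('q, 'a, nat set) automaton \<Rightarrow> bool" where
  "safe_deterministic A \<longleftrightarrow>
     (\<forall>q a p1 p2. (q, a, p1) \<in> safe_trans A \<longrightarrow> (q, a, p2) \<in> safe_trans A \<longrightarrow> p1 = p2)"

definition nice :: "'a set \<Rightarrow> ('q, 'a, nat set) automaton \<Rightarrow> bool" where
  "nice Sig A \<longleftrightarrow> all_reachable A \<and> semantically_deterministic Sig A
     \<and> normal_form A \<and> safe_deterministic A"

definition safe_centralised :: "'a set \<Rightarrow> ('q, 'a, nat set) automaton \<Rightarrow> bool" where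
  "safe_centralised Sig A \<longleftrightarrow> (\<forall>p \<in> states A. \<forall>q \<in> states A.
     equiv_states Sig A p q \<longrightarrow>
     (safe_lang Sig A p \<subseteq> safe_lang Sig A q \<or> safe_lang Sig A q \<subseteq> safe_lang Sig A p)
     \<longrightarrow> safe_scc A p = safe_scc A q)"

definition safe_minimal :: "'a set \<Rightarrow> ('q, 'a, nat set) automaton \<Rightarrow> bool" where
  "safe_minimal Sig A \<longleftrightarrow> (\<forall>p \<in> states A. \<forall>q \<in> states A.
     equiv_states Sig A p q \<longrightarrow> safe_lang Sig A p = safe_lang Sig A q \<longrightarrow> p = q)"

end

theory Submission
  imports Defs
begin

definition pathw :: "('n \<times> 'a \<times> 'n) set \<Rightarrow> 'n \<Rightarrow> (nat \<Rightarrow> 'a) \<Rightarrow> bool" where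
  "pathw G n z \<longleftrightarrow> (\<exists>ns. ns 0 = n \<and> (\<forall>i. (ns i, z i, ns (Suc i)) \<in> G))"

inductive fpath :: "('n \<times> 'a \<times> 'n) set \<Rightarrow> 'n \<Rightarrow> 'a list \<Rightarrow> 'n \<Rightarrow> bool" for G where
  fp_nil: "fpath G n [] n"
| fp_cons: "(n, a, n') \<in> G \<Longrightarrow> fpath G n' y m \<Longrightarrow> fpath G n (a # y) m"

lemma fpath_append: "fpath G n y m \<Longrightarrow> fpath G m y' m' \<Longrightarrow> fpath G n (y @ y') m'"
  by (induction rule: fpath.induct) (auto intro: fpath.intros)

lemma fpath_snoc: "fpath G n y m \<Longrightarrow> (m, a, m') \<in> G \<Longrightarrow> fpath G n (y @ [a]) m'"
  by (erule fpath_append) (auto intro: fpath.intros)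

lemma length_wprefix[simp]: "length (wprefix k w) = k"
  by (simp add: wprefix_def)

lemma wprefix_Suc: "wprefix (Suc i) w = wprefix i w @ [w i]"
  by (simp add: wprefix_def)

lemma wprefix_0[simp]: "wprefix 0 w = []"
  by (simp add: wprefix_def)

lemma conc_Nil[simp]: "conc [] z = z"
  by (simp add: conc_def)

lemma conc_app: "conc (u @ v) z = conc u (conc v z)"
  by (auto simp: conc_def nth_append fun_eq_iff)

lemma conc_Cons0[simp]: "conc (a # y) z 0 = a"
  by (simp add: conc_def)

lemma conc_ConsSuc[simp]: "conc (a # y) z (Suc i) = conc y z i"
  by (simp add: conc_def)

lemma wprefix_conc_long: "wprefix (length h + k) (conc h z) = h @ wprefix k z"
  by (rule nth_equalityI) (auto simp: wprefix_def conc_def nth_append)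

lemma wprefix_conc_short: "k \<le> length h \<Longrightarrow> wprefix k (conc h z) = take k h"
  by (rule nth_equalityI) (auto simp: wprefix_def conc_def)

lemma wprefix_conc_len[simp]: "wprefix (length h) (conc h z) = h"
  using wprefix_conc_short[of "length h" h z] by simp

lemma conc_wprefix_shift: "conc (wprefix k z) (\<lambda>i. z (i + k)) = z"
  by (auto simp: conc_def wprefix_def fun_eq_iff)

lemma wprefix_eqI: "(\<And>i. i < k \<Longrightarrow> z i = z' i) \<Longrightarrow> wprefix k z = wprefix k z'"
  by (simp add: wprefix_def)

lemma pathw_conc: "fpath G n y m \<Longrightarrow> pathw G m z \<Longrightarrow> pathw G n (conc y z)"
proof (induction rule: fpath.induct)
  case (fp_nil n) then show ?case by simp
next
  case (fp_cons n a n' y m)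
  then obtain ns where ns: "ns 0 = n'" "\<forall>i. (ns i, conc y z i, ns (Suc i)) \<in> G"
    by (auto simp: pathw_def)
  define ns' where "ns' i = (case i of 0 \<Rightarrow> n | Suc j \<Rightarrow> ns j)" for i
  have "\<forall>i. (ns' i, conc (a # y) z i, ns' (Suc i)) \<in> G"
  proof
    fix i show "(ns' i, conc (a # y) z i, ns' (Suc i)) \<in> G"
      using ns fp_cons(1) by (cases i) (auto simp: ns'_def)
  qed
  then show ?case unfolding pathw_def by (intro exI[of _ ns']) (simp add: ns'_def)
qed

lemma fpath_of_seq: "(\<forall>i. (ns i, z i, ns (Suc i)) \<in> G) \<Longrightarrow> fpath G (ns k) (map z [k..<k+m]) (ns (k+m))"
proof (induction m arbitrary: k)
  case 0 then show ?case by (simp add: fpath.intros)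
next
  case (Suc m)
  have e: "[k..<k + Suc m] = k # [Suc k..<Suc k + m]"
    by (simp add: upt_conv_Cons)
  have "fpath G (ns (Suc k)) (map z [Suc k..<Suc k + m]) (ns (Suc k + m))"
    using Suc by blast
  then have "fpath G (ns k) (z k # map z [Suc k..<Suc k + m]) (ns (Suc k + m))"
    using Suc.prems by (auto intro: fpath.intros)
  then show ?case unfolding e by simp
qed

lemma pathw_split:
  assumes "pathw G n z"
  shows "\<exists>m. fpath G n (wprefix k z) m \<and> pathw G m (\<lambda>i. z (i + k))"
proof -
  obtain ns where ns: "ns 0 = n" "\<forall>i. (ns i, z i, ns (Suc i)) \<in> G"
    using assms by (auto simp: pathw_def)
  have "fpath G n (wprefix k z) (ns k)"
    using fpath_of_seq[OF ns(2), of 0 k] ns(1) by (simp add: wprefix_def)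
  moreover have "pathw G (ns k) (\<lambda>i. z (i + k))"
    unfolding pathw_def using ns(2)
    by (intro exI[of _ "\<lambda>i. ns (i + k)"]) simp
  ultimately show ?thesis by blast
qed

lemma pathw_prefix: "pathw G n z \<Longrightarrow> \<exists>m. fpath G n (wprefix k z) m"
  using pathw_split[of G n z k] by blast

lemma fpath_stays: "fpath G n y m \<Longrightarrow> G \<subseteq> P \<times> UNIV \<times> P \<Longrightarrow> n \<in> P \<Longrightarrow> m \<in> P"
  by (induction rule: fpath.induct) auto

lemma gcc_shift: "x \<in> gen_cobuchi_cond C \<Longrightarrow> (\<lambda>i. x (i + m)) \<in> gen_cobuchi_cond C"
proof -
  assume "x \<in> gen_cobuchi_cond C"
  then obtain c where c: "c \<in> C" "finite {i. c \<in> x i}" by (auto simp: gen_cobuchi_cond_def)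
  have "{i. c \<in> x (i + m)} = (\<lambda>i. i + m) -` {i. c \<in> x i}" by auto
  moreover have "finite ((\<lambda>i. i + m) -` {i. c \<in> x i})"
    by (rule finite_vimageI[OF c(2)]) (simp add: inj_on_def)
  ultimately have "finite {i. c \<in> x (i + m)}" by simp
  then show ?thesis using c(1) by (auto simp: gen_cobuchi_cond_def)
qed

lemma gcc_cons: "x \<in> gen_cobuchi_cond C \<Longrightarrow> (\<lambda>i. case i of 0 \<Rightarrow> a | Suc j \<Rightarrow> x j) \<in> gen_cobuchi_cond C"
proof -
  assume "x \<in> gen_cobuchi_cond C"
  then obtain c where c: "c \<in> C" "finite {i. c \<in> x i}" by (auto simp: gen_cobuchi_cond_def)
  have "{i. c \<in> (case i of 0 \<Rightarrow> a | Suc j \<Rightarrow> x j)} \<subseteq> insert 0 (Suc ` {i. c \<in> x i})"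
  proof
    fix i assume "i \<in> {i. c \<in> (case i of 0 \<Rightarrow> a | Suc j \<Rightarrow> x j)}"
    then show "i \<in> insert 0 (Suc ` {i. c \<in> x i})" by (cases i) auto
  qed
  then have "finite {i. c \<in> (case i of 0 \<Rightarrow> a | Suc j \<Rightarrow> x j)}"
    using c(2) finite_subset by blast
  then show ?thesis using c(1) by (auto simp: gen_cobuchi_cond_def)
qed

lemma stabilise:
  fixes G :: "('n \<times> 'a \<times> 'n) set" and F :: "'a list \<Rightarrow> 'c set"
  assumes finJ: "finite J"
    and hyp: "\<And>z. pathw G n0 z \<Longrightarrow> (\<lambda>i. F (wprefix (Suc i) z)) \<in> gen_cobuchi_cond J"
    and ne: "pathw G n0 z0"
  shows "\<exists>y n1 j. j \<in> J \<and> fpath G n0 y n1 \<and>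
           (\<forall>z. pathw G n1 z \<longrightarrow> (\<forall>i\<ge>length y. j \<notin> F (wprefix (Suc i) (conc y z))))"
proof (rule ccontr)
  assume "\<not> ?thesis"
  then have neg: "\<And>y n1 j. j \<in> J \<Longrightarrow> fpath G n0 y n1 \<Longrightarrow>
      \<exists>z. pathw G n1 z \<and> (\<exists>i\<ge>length y. j \<in> F (wprefix (Suc i) (conc y z)))"
    by blast
  have "J \<noteq> {}"
    using hyp[OF ne] by (auto simp: gen_cobuchi_cond_def)
  obtain js where js: "set js = J" using finite_list[OF finJ] by blast
  define len where "len = length js"
  have lenpos: "len > 0" using js \<open>J \<noteq> {}\<close> len_def by auto
  define valid where "valid = (\<lambda>(z::nat \<Rightarrow> 'a, ns::nat \<Rightarrow> 'n, m::nat). ns 0 = n0 \<and> (\<forall>i. (ns i, z i, ns (Suc i)) \<in> G))"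
  define P where "P = (\<lambda>j (z::nat \<Rightarrow> 'a, ns::nat \<Rightarrow> 'n, m::nat) (z', ns', m').
      valid (z', ns', m') \<and> m < m' \<and> (\<forall>i<m. z' i = z i) \<and> (\<forall>i\<le>m. ns' i = ns i) \<and> j \<in> F (wprefix m' z'))"
  have step: "\<exists>st'. P j st st'" if vst: "valid st" and jJ0: "j \<in> J" for st j
  proof -
    obtain z ns m where st: "st = (z, ns, m)" by (cases st) auto
    have v: "ns 0 = n0" "\<forall>i. (ns i, z i, ns (Suc i)) \<in> G" using vst st by (auto simp: valid_def)
    have fp: "fpath G n0 (wprefix m z) (ns m)"
      using fpath_of_seq[OF v(2), of 0 m] v(1) by (simp add: wprefix_def)
    obtain z'' i where z'': "pathw G (ns m) z''" "i \<ge> m" "j \<in> F (wprefix (Suc i) (conc (wprefix m z) z''))"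
      using neg[OF jJ0 fp] by auto
    obtain ms where ms: "ms 0 = ns m" "\<forall>i. (ms i, z'' i, ms (Suc i)) \<in> G"
      using z''(1) by (auto simp: pathw_def)
    define z' where "z' = conc (wprefix m z) z''"
    define ns' where "ns' = (\<lambda>i. if i < m then ns i else ms (i - m))"
    have val: "valid (z', ns', Suc i)"
      unfolding valid_def
    proof (clarsimp, intro conjI allI)
      show "ns' 0 = n0" using v(1) ms(1) by (auto simp: ns'_def)
      fix k
      show "(ns' k, z' k, ns' (Suc k)) \<in> G"
      proof (cases "k < m")
        case True
        then have "Suc k < m \<or> Suc k = m" by auto
        then show ?thesis using v(2) ms(1) True
          by (auto simp: ns'_def z'_def conc_def wprefix_def)
      next
        case False
        then have "Suc k - m = Suc (k - m)" by auto
        then show ?thesis using False ms(2)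
          by (auto simp: ns'_def z'_def conc_def wprefix_def)
      qed
    qed
    have "P j st (z', ns', Suc i)"
      unfolding P_def st using val z''(2,3) ms(1)
      by (auto simp: z'_def ns'_def conc_def wprefix_def)
    then show ?thesis by blast
  qed
  define jj where "jj k = js ! (k mod len)" for k
  have jjJ: "jj k \<in> J" for k using js lenpos by (auto simp: jj_def len_def)
  obtain ns0 where ns0: "ns0 0 = n0" "\<forall>i. (ns0 i, z0 i, ns0 (Suc i)) \<in> G"
    using ne by (auto simp: pathw_def)
  define sq where "sq = rec_nat (z0, ns0, 0) (\<lambda>k st. SOME st'. P (jj k) st st')"
  have sq0: "sq 0 = (z0, ns0, 0)" by (simp add: sq_def)
  have sqS: "sq (Suc k) = (SOME st'. P (jj k) (sq k) st')" for k by (simp add: sq_def)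
  have inv: "valid (sq k) \<and> P (jj k) (sq k) (sq (Suc k))" for k
  proof (induction k)
    case 0
    have v: "valid (sq 0)" using ns0 sq0 by (simp add: valid_def)
    then show ?case using someI_ex[OF step[OF v jjJ]] sqS by auto
  next
    case (Suc k)
    have v: "valid (sq (Suc k))"
      using Suc by (cases "sq k", cases "sq (Suc k)") (auto simp: P_def)
    then show ?case using someI_ex[OF step[OF v jjJ]] sqS by auto
  qed
  define Z where "Z k = fst (sq k)" for k
  define N where "N k = fst (snd (sq k))" for k
  define M where "M k = snd (snd (sq k))" for k
  have valk: "N k 0 = n0 \<and> (\<forall>i. (N k i, Z k i, N k (Suc i)) \<in> G)" for k
    using inv[of k] by (cases "sq k") (auto simp: valid_def Z_def N_def)
  have Pk: "M k < M (Suc k) \<and> (\<forall>i<M k. Z (Suc k) i = Z k i) \<and> (\<forall>i\<le>M k. N (Suc k) i = N k i)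
      \<and> jj k \<in> F (wprefix (M (Suc k)) (Z (Suc k)))" for k
    using inv[of k] by (cases "sq k", cases "sq (Suc k)") (auto simp: P_def Z_def N_def M_def)
  have Mge: "M k \<ge> k" for k
    by (induction k) (use Pk in \<open>auto simp: Suc_le_eq intro: le_less_trans\<close>)
  have Mmono: "M k \<le> M (k + d)" for k d
  proof (induction d)
    case (Suc d)
    have "M (k + d) < M (Suc (k + d))" using Pk by blast
    then show ?case using Suc by simp
  qed simp
  have agree: "(\<forall>i<M k. Z (k + d) i = Z k i) \<and> (\<forall>i\<le>M k. N (k + d) i = N k i)" for k d
  proof (induction d)
    case 0 then show ?case by simp
  next
    case (Suc d)
    have m: "M k \<le> M (k + d)" by (rule Mmono)
    have p1: "\<forall>i<M (k+d). Z (Suc (k + d)) i = Z (k+d) i" and p2: "\<forall>i\<le>M (k+d). N (Suc (k + d)) i = N (k+d) i"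
      using Pk[of "k + d"] by blast+
    show ?case
    proof (intro conjI allI impI)
      fix i assume "i < M k"
      then show "Z (k + Suc d) i = Z k i" using p1 m Suc.IH by simp
    next
      fix i assume "i \<le> M k"
      then show "N (k + Suc d) i = N k i" using p2 m Suc.IH by simp
    qed
  qed
  have agreeZ: "k \<le> k' \<Longrightarrow> i < M k \<Longrightarrow> Z k' i = Z k i" for k k' i
    using agree[of k "k' - k"] by auto
  have agreeN: "k \<le> k' \<Longrightarrow> i \<le> M k \<Longrightarrow> N k' i = N k i" for k k' i
    using agree[of k "k' - k"] by auto
  define Zl where "Zl i = Z (Suc i) i" for i
  define Nl where "Nl i = N (Suc i) i" for i
  have ZlE: "Suc i \<le> k \<Longrightarrow> Zl i = Z k i" for i k
    using agreeZ[of "Suc i" k i] Mge[of "Suc i"] by (simp add: Zl_def)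
  have NlE: "Suc i \<le> k \<Longrightarrow> Nl i = N k i" for i k
    using agreeN[of "Suc i" k i] Mge[of "Suc i"] by (simp add: Nl_def)
  have pw: "pathw G n0 Zl"
    unfolding pathw_def
  proof (intro exI[of _ Nl] conjI allI)
    show "Nl 0 = n0" using valk by (simp add: Nl_def)
    fix i
    show "(Nl i, Zl i, Nl (Suc i)) \<in> G"
      using valk[of "Suc (Suc i)"] ZlE[of i "Suc (Suc i)"] NlE[of i "Suc (Suc i)"]
        NlE[of "Suc i" "Suc (Suc i)"] by simp
  qed
  define pos where "pos k = M (Suc k) - 1" for k
  have hit: "jj k \<in> F (wprefix (Suc (pos k)) Zl)" for k
  proof -
    have "M (Suc k) > 0" using Pk[of k] by auto
    then have e: "Suc (pos k) = M (Suc k)" by (simp add: pos_def)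
    have "wprefix (M (Suc k)) Zl = wprefix (M (Suc k)) (Z (Suc k))"
    proof (rule wprefix_eqI)
      fix i assume i: "i < M (Suc k)"
      have "Zl i = Z (max (Suc i) (Suc k)) i" by (rule ZlE) simp
      also have "\<dots> = Z (Suc k) i" by (rule agreeZ) (use i in auto)
      finally show "Zl i = Z (Suc k) i" .
    qed
    then show ?thesis using Pk[of k] e by simp
  qed
  have posge: "pos k \<ge> k" for k using Mge[of "Suc k"] by (simp add: pos_def)
  obtain j where j: "j \<in> J" "finite {i. j \<in> F (wprefix (Suc i) Zl)}"
    using hyp[OF pw] by (auto simp: gen_cobuchi_cond_def)
  obtain t where t: "t < len" "js ! t = j" using j(1) js by (auto simp: in_set_conv_nth len_def)
  obtain mb where mb: "\<forall>n\<in>{i. j \<in> F (wprefix (Suc i) Zl)}. n \<le> mb"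
    using j(2) finite_nat_set_iff_bounded_le by blast
  have "\<exists>n\<ge>Suc mb. n \<in> {i. j \<in> F (wprefix (Suc i) Zl)}"
  proof -
    define m where "m = Suc mb"
    define k where "k = t + len * m"
    have "k mod len = t" using t(1) by (simp add: k_def)
    then have "jj k = j" using t by (simp add: jj_def)
    moreover have "k \<ge> m" 
    proof -
      have "len * m \<ge> 1 * m" using lenpos by (intro mult_le_mono1) simp
      then have "len * m \<ge> m" by simp
      then show ?thesis unfolding k_def by linarith
    qed
    ultimately show "\<exists>n\<ge>m. n \<in> {i. j \<in> F (wprefix (Suc i) Zl)}"
      using hit[of k] posge[of k] by (intro exI[of _ "pos k"]) auto
  qed
  then show False using mb by fastforce
qed

definition stR :: "('q, 'a, 'g) automaton \<Rightarrow> ('a list \<Rightarrow> 'q \<times> 'a \<times> 'q) \<Rightarrow> 'a list \<Rightarrow> 'q" where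
  "stR A \<sigma> h = (if h = [] then init A else snd (snd (\<sigma> h)))"

definition reachrel :: "('q, 'a, 'g) automaton \<Rightarrow> ('q \<times> 'q) set" where
  "reachrel A = {(p, p'). \<exists>a. (p, a, p') \<in> trans A}"

lemma res_trans:
  assumes "is_resolver Sig A \<sigma>" "w \<in> omega_words Sig"
  shows "\<sigma> (wprefix (Suc i) w) = (stR A \<sigma> (wprefix i w), w i, stR A \<sigma> (wprefix (Suc i) w))
         \<and> \<sigma> (wprefix (Suc i) w) \<in> trans A"
proof -
  have run: "is_run A w (\<lambda>i. \<sigma> (wprefix (Suc i) w))" using assms by (auto simp: is_resolver_def)
  have f: "fst (\<sigma> (wprefix (Suc i) w)) = stR A \<sigma> (wprefix i w)"
  proof (cases i)
    case 0 then show ?thesis using run by (simp add: is_run_def stR_def)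
  next
    case (Suc k)
    then show ?thesis using run unfolding is_run_def stR_def
      by (metis length_wprefix list.size(3) nat.distinct(1))
  qed
  have m: "fst (snd (\<sigma> (wprefix (Suc i) w))) = w i" using run by (simp add: is_run_def)
  have s: "snd (snd (\<sigma> (wprefix (Suc i) w))) = stR A \<sigma> (wprefix (Suc i) w)"
    by (simp add: stR_def wprefix_def)
  show ?thesis using f m s run by (auto simp: is_run_def prod_eq_iff)
qed

lemma stR_state:
  assumes "is_automaton Sig A" "is_resolver Sig A \<sigma>" "w \<in> omega_words Sig"
  shows "stR A \<sigma> (wprefix i w) \<in> states A"
  using res_trans[OF assms(2,3), of i] assms(1) by (auto simp: is_automaton_def)

lemma stR_reach:
  assumes "is_resolver Sig A \<sigma>" "w \<in> omega_words Sig"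
  shows "(init A, stR A \<sigma> (wprefix i w)) \<in> (reachrel A)\<^sup>*"
proof (induction i)
  case 0 then show ?case by (simp add: stR_def)
next
  case (Suc i)
  have "(stR A \<sigma> (wprefix i w), stR A \<sigma> (wprefix (Suc i) w)) \<in> reachrel A"
    using res_trans[OF assms, of i] unfolding reachrel_def by (metis (mono_tags, lifting) case_prodI mem_Collect_eq)
  then show ?case by (rule rtrancl_into_rtrancl[OF Suc.IH])
qed

lemma lang_upd:
  "w \<in> lang Sig (A\<lparr>init := q\<rparr>) \<longleftrightarrow> w \<in> omega_words Sig \<and>
    (\<exists>r. fst (r 0) = q \<and> (\<forall>i. r i \<in> trans A \<and> fst (snd (r i)) = w i \<and> snd (snd (r i)) = fst (r (Suc i)))
       \<and> (\<lambda>i. col A (r i)) \<in> acc A)"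
  by (simp add: lang_def is_run_def accepting_run_def)

lemma lang_init_self[simp]: "A\<lparr>init := init A\<rparr> = A" by simp

lemma conc1_omega: "a \<in> Sig \<Longrightarrow> w \<in> omega_words Sig \<Longrightarrow> conc [a] w \<in> omega_words Sig"
  by (auto simp: omega_words_def conc_def)

lemma lang_prepend:
  assumes acc: "acc A = gen_cobuchi_cond C" and t: "(p, a, q) \<in> trans A" and a: "a \<in> Sig"
    and w: "w \<in> lang Sig (A\<lparr>init := q\<rparr>)"
  shows "conc [a] w \<in> lang Sig (A\<lparr>init := p\<rparr>)"
proof -
  obtain r where r: "w \<in> omega_words Sig" "fst (r 0) = q"
    "\<forall>i. r i \<in> trans A \<and> fst (snd (r i)) = w i \<and> snd (snd (r i)) = fst (r (Suc i))"
    "(\<lambda>i. col A (r i)) \<in> gen_cobuchi_cond C"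
    using w acc by (auto simp: lang_upd)
  define r' where "r' i = (case i of 0 \<Rightarrow> (p, a, q) | Suc j \<Rightarrow> r j)" for i
  have c: "(\<lambda>i. col A (r' i)) = (\<lambda>i. case i of 0 \<Rightarrow> col A (p, a, q) | Suc j \<Rightarrow> col A (r j))"
    by (auto simp: r'_def fun_eq_iff split: nat.splits)
  have "\<forall>i. r' i \<in> trans A \<and> fst (snd (r' i)) = conc [a] w i \<and> snd (snd (r' i)) = fst (r' (Suc i))"
  proof
    fix i show "r' i \<in> trans A \<and> fst (snd (r' i)) = conc [a] w i \<and> snd (snd (r' i)) = fst (r' (Suc i))"
      using r t by (cases i) (auto simp: r'_def conc_def)
  qed
  moreover have "fst (r' 0) = p" by (simp add: r'_def)
  moreover have "(\<lambda>i. col A (r' i)) \<in> acc A"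
    unfolding c acc by (rule gcc_cons[OF r(4)])
  ultimately show ?thesis using conc1_omega[OF a r(1)] by (auto simp: lang_upd)
qed

lemma lang_tail:
  assumes acc: "acc A = gen_cobuchi_cond C" and w: "w \<in> omega_words Sig"
    and aw: "conc [a] w \<in> lang Sig (A\<lparr>init := p\<rparr>)"
  shows "\<exists>q. (p, a, q) \<in> trans A \<and> w \<in> lang Sig (A\<lparr>init := q\<rparr>)"
proof -
  obtain r where r: "fst (r 0) = p"
    "\<forall>i. r i \<in> trans A \<and> fst (snd (r i)) = conc [a] w i \<and> snd (snd (r i)) = fst (r (Suc i))"
    "(\<lambda>i. col A (r i)) \<in> gen_cobuchi_cond C"
    using aw acc by (auto simp: lang_upd)
  have r0: "r 0 = (p, a, fst (r 1))" using r(1) r(2)[rule_format, of 0] by (auto simp: prod_eq_iff)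
  have "(\<lambda>i. col A (r (i + 1))) \<in> gen_cobuchi_cond C" using gcc_shift[OF r(3), of 1] by simp
  then have "w \<in> lang Sig (A\<lparr>init := fst (r 1)\<rparr>)"
    unfolding lang_upd acc using w r(2)
    by (intro conjI exI[of _ "\<lambda>i. r (Suc i)"]) (auto simp: conc_def)
  then show ?thesis using r0 r(2) by (metis)
qed

lemma lang_reach_sub:
  assumes acc: "acc A = gen_cobuchi_cond C" and tr: "trans A \<subseteq> states A \<times> Sig \<times> states A"
    and pi: "prefix_independent Sig L" and lA: "lang Sig A \<subseteq> L"
    and reach: "(init A, q) \<in> (reachrel A)\<^sup>*"
  shows "lang Sig (A\<lparr>init := q\<rparr>) \<subseteq> L"
  using reach
proof (induction rule: rtrancl_induct)
  case base then show ?case using lA by simp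
next
  case (step p q)
  then obtain a where t: "(p, a, q) \<in> trans A" by (auto simp: reachrel_def)
  have a: "a \<in> Sig" using t tr by auto
  show ?case
  proof
    fix w assume w: "w \<in> lang Sig (A\<lparr>init := q\<rparr>)"
    have "conc [a] w \<in> L" using lang_prepend[OF acc t a w] step.IH by blast
    moreover have "w \<in> omega_words Sig" using w by (simp add: lang_def)
    ultimately show "w \<in> L" using pi a unfolding prefix_independent_def by (metis empty_set empty_subsetI insert_subset list.simps(15))
  qed
qed

lemma lang_reach_eq:
  assumes acc: "acc A = gen_cobuchi_cond C" and tr: "trans A \<subseteq> states A \<times> Sig \<times> states A"
    and pi: "prefix_independent Sig L" and lA: "lang Sig A = L" and LO: "L \<subseteq> omega_words Sig"
    and sd: "semantically_deterministic Sig A"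
    and reach: "(init A, q) \<in> (reachrel A)\<^sup>*"
  shows "lang Sig (A\<lparr>init := q\<rparr>) = L"
  using reach
proof (induction rule: rtrancl_induct)
  case base then show ?case using lA by simp
next
  case (step p q)
  then obtain a where t: "(p, a, q) \<in> trans A" by (auto simp: reachrel_def)
  have a: "a \<in> Sig" using t tr by auto
  have piu: "w \<in> omega_words Sig \<Longrightarrow> conc [a] w \<in> L \<longleftrightarrow> w \<in> L" for w
    using pi a unfolding prefix_independent_def by (metis empty_set empty_subsetI insert_subset list.simps(15))
  show ?case
  proof
    show "lang Sig (A\<lparr>init := q\<rparr>) \<subseteq> L"
    proof
      fix w assume w: "w \<in> lang Sig (A\<lparr>init := q\<rparr>)"
      have "conc [a] w \<in> L" using lang_prepend[OF acc t a w] step.IH by blast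
      moreover have "w \<in> omega_words Sig" using w by (simp add: lang_def)
      ultimately show "w \<in> L" using piu by blast
    qed
  next
    show "L \<subseteq> lang Sig (A\<lparr>init := q\<rparr>)"
    proof
      fix w assume w: "w \<in> L"
      have wo: "w \<in> omega_words Sig" using w LO by blast
      have "conc [a] w \<in> lang Sig (A\<lparr>init := p\<rparr>)" using w piu[OF wo] step.IH by blast
      then obtain q' where q': "(p, a, q') \<in> trans A" "w \<in> lang Sig (A\<lparr>init := q'\<rparr>)"
        using lang_tail[OF acc wo] by blast
      have "equiv_states Sig A q' q" using sd q'(1) t by (auto simp: semantically_deterministic_def)
      then show "w \<in> lang Sig (A\<lparr>init := q\<rparr>)" using q'(2) by (simp add: equiv_states_def)
    qed
  qed
qed

lemma pathw_lang:
  assumes acc: "acc A = gen_cobuchi_cond C" and c: "c \<in> C"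
    and G: "G \<subseteq> trans A" "\<forall>t\<in>G. c \<notin> col A t" "G \<subseteq> UNIV \<times> Sig \<times> UNIV"
    and pw: "pathw G q z"
  shows "z \<in> lang Sig (A\<lparr>init := q\<rparr>)"
proof -
  obtain ns where ns: "ns 0 = q" "\<forall>i. (ns i, z i, ns (Suc i)) \<in> G" using pw by (auto simp: pathw_def)
  have zo: "z \<in> omega_words Sig" using ns(2) G(3) by (auto simp: omega_words_def)
  have e: "{i. c \<in> col A (ns i, z i, ns (Suc i))} = {}" using ns(2) G(2) by auto
  have "(\<lambda>i. col A (ns i, z i, ns (Suc i))) \<in> gen_cobuchi_cond C"
    unfolding gen_cobuchi_cond_def using c e by (intro CollectI bexI[of _ c]) simp_all
  then show ?thesis unfolding lang_upd acc using zo ns G(1)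
    by (intro conjI exI[of _ "\<lambda>i. (ns i, z i, ns (Suc i))"]) auto
qed

lemma safe_trans_sub: "safe_trans A \<subseteq> trans A"
  by (auto simp: safe_trans_def)

lemma safe_lang_pathw:
  assumes "is_automaton Sig A"
  shows "safe_lang Sig A s = Collect (pathw (safe_trans A) s)"
proof -
  have "pathw (safe_trans A) s z \<Longrightarrow> z \<in> omega_words Sig" for z
    using assms by (auto simp: pathw_def omega_words_def is_automaton_def safe_trans_def)
  then show ?thesis by (auto simp: safe_lang_def pathw_def)
qed

lemma scc_self: "s \<in> states A \<Longrightarrow> s \<in> safe_scc A s"
  by (simp add: safe_scc_def)

lemma scc_eq: "t \<in> safe_scc A s \<Longrightarrow> safe_scc A t = safe_scc A s"
proof -
  assume t: "t \<in> safe_scc A s"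
  then have st: "(s, t) \<in> (safe_edges A)\<^sup>*" "(t, s) \<in> (safe_edges A)\<^sup>*" by (auto simp: safe_scc_def)
  show ?thesis unfolding safe_scc_def using st by (blast intro: rtrancl_trans)
qed

lemma scc_states: "safe_scc A s \<subseteq> states A"
  by (auto simp: safe_scc_def)

lemma safe_stay:
  assumes nf: "normal_form A" and aut: "is_automaton Sig A" and t: "(p, a, q) \<in> safe_trans A"
  shows "safe_scc A q = safe_scc A p"
proof (rule ccontr)
  assume "safe_scc A q \<noteq> safe_scc A p"
  then have "(p, a, q) \<in> cobuchi_trans A" using nf t unfolding normal_form_def safe_trans_def by auto
  then show False using t unfolding safe_trans_def by auto
qed

lemma fpath_scc:
  assumes nf: "normal_form A" and aut: "is_automaton Sig A"
  shows "fpath (safe_trans A) s v t \<Longrightarrow> safe_scc A t = safe_scc A s"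
proof (induction rule: fpath.induct)
  case (fp_cons n a n' y m)
  have "safe_scc A n' = safe_scc A n" by (rule safe_stay[OF nf aut fp_cons(1)])
  then show ?case using fp_cons.IH by simp
qed simp

lemma scc_connect:
  assumes "s \<in> safe_scc A q" "t \<in> safe_scc A q"
  shows "\<exists>v. fpath (safe_trans A) s v t"
proof -
  have "(s, q) \<in> (safe_edges A)\<^sup>*" "(q, t) \<in> (safe_edges A)\<^sup>*" using assms unfolding safe_scc_def by auto
  then have "(s, t) \<in> (safe_edges A)\<^sup>*" by (rule rtrancl_trans)
  then show ?thesis
  proof (induction rule: rtrancl_induct)
    case base then show ?case by (auto intro: fpath.intros)
  next
    case (step y z)
    obtain v where v: "fpath (safe_trans A) s v y" using step.IH by blast
    obtain a where a: "(y, a, z) \<in> safe_trans A" using step.hyps(2) by (auto simp: safe_edges_def)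
    show ?case using fpath_snoc[OF v a] by blast
  qed
qed

lemma safe_det_split:
  assumes sd: "safe_deterministic A"
  shows "fpath (safe_trans A) s v t \<Longrightarrow> pathw (safe_trans A) s (conc v z) \<Longrightarrow> pathw (safe_trans A) t z"
proof (induction rule: fpath.induct)
  case (fp_nil n) then show ?case by simp
next
  case (fp_cons n a n' y m)
  obtain ns where ns: "ns 0 = n" "\<forall>i. (ns i, conc (a # y) z i, ns (Suc i)) \<in> safe_trans A"
    using fp_cons.prems by (auto simp: pathw_def)
  have "(n, a, ns 1) \<in> safe_trans A" using ns spec[OF ns(2), of 0] by simp
  then have "ns 1 = n'" using sd fp_cons(1) by (auto simp: safe_deterministic_def)
  then have "pathw (safe_trans A) n' (conc y z)"
    unfolding pathw_def
  proof (intro exI[of _ "\<lambda>i. ns (Suc i)"] conjI allI)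
    fix i
    have "(ns (Suc i), conc (a # y) z (Suc i), ns (Suc (Suc i))) \<in> safe_trans A" using ns(2) by blast
    then show "(ns (Suc i), conc y z i, ns (Suc (Suc i))) \<in> safe_trans A" by simp
  qed (use \<open>ns 1 = n'\<close> in simp)
  then show ?case using fp_cons.IH by blast
qed

lemma scc_nonempty_path:
  assumes nf: "normal_form A" and aut: "is_automaton Sig A"
    and two: "card (safe_scc A q) \<ge> 2" and s: "s \<in> safe_scc A q"
  shows "\<exists>z. pathw (safe_trans A) s z"
proof -
  have ex: "\<exists>p. (x, fst p, snd p) \<in> safe_trans A \<and> snd p \<in> safe_scc A q" if x: "x \<in> safe_scc A q" for x
  proof -
    obtain t where t: "t \<in> safe_scc A q" "t \<noteq> x"
    proof -
      have "\<not> safe_scc A q \<subseteq> {x}"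
      proof
        assume "safe_scc A q \<subseteq> {x}"
        then have "card (safe_scc A q) \<le> card {x}" by (intro card_mono) auto
        then show False using two by simp
      qed
      then show ?thesis using that by blast
    qed
    obtain v where v: "fpath (safe_trans A) x v t" using scc_connect[OF x t(1)] by blast
    obtain a s2 where e: "(x, a, s2) \<in> safe_trans A" using v t(2)
      by (cases rule: fpath.cases) auto
    have e2: "safe_scc A s2 = safe_scc A x" by (rule safe_stay[OF nf aut e])
    have s2: "s2 \<in> states A" using e aut by (auto simp: safe_trans_def is_automaton_def)
    have "s2 \<in> safe_scc A q" using scc_self[OF s2] e2 scc_eq[OF x] by simp
    then show ?thesis using e by (intro exI[of _ "(a, s2)"]) simp
  qed
  define nx where "nx x = (SOME p. (x, fst p, snd p) \<in> safe_trans A \<and> snd p \<in> safe_scc A q)" for x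
  have nx: "(x, fst (nx x), snd (nx x)) \<in> safe_trans A \<and> snd (nx x) \<in> safe_scc A q"
    if "x \<in> safe_scc A q" for x
    unfolding nx_def by (rule someI_ex[OF ex[OF that]])
  define ns where "ns = rec_nat s (\<lambda>_ x. snd (nx x))"
  have ns0: "ns 0 = s" and nsS: "ns (Suc i) = snd (nx (ns i))" for i by (simp_all add: ns_def)
  have insc: "ns i \<in> safe_scc A q" for i
  proof (induction i)
    case 0 then show ?case using s ns0 by simp
  next
    case (Suc i) then show ?case using nx[OF Suc] nsS by simp
  qed
  have "\<forall>i. (ns i, fst (nx (ns i)), ns (Suc i)) \<in> safe_trans A"
    using nx[OF insc] nsS by simp
  then show ?thesis unfolding pathw_def using ns0
    by (intro exI[of _ "\<lambda>i. fst (nx (ns i))"] exI[of _ ns]) simp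
qed

lemma fpath_set: "fpath G n y m \<Longrightarrow> G \<subseteq> UNIV \<times> Sig \<times> UNIV \<Longrightarrow> set y \<subseteq> Sig"
  by (induction rule: fpath.induct) auto

lemma pathw_omega: "pathw G n z \<Longrightarrow> G \<subseteq> UNIV \<times> Sig \<times> UNIV \<Longrightarrow> z \<in> omega_words Sig"
  by (auto simp: pathw_def omega_words_def)

lemma conc_omega: "set u \<subseteq> Sig \<Longrightarrow> z \<in> omega_words Sig \<Longrightarrow> conc u z \<in> omega_words Sig"
  by (auto simp: omega_words_def conc_def)

lemma safe_trans_sig: "is_automaton Sig A \<Longrightarrow> safe_trans A \<subseteq> UNIV \<times> Sig \<times> UNIV"
  by (auto simp: is_automaton_def safe_trans_def)

lemma safe_trans_states: "is_automaton Sig A \<Longrightarrow> safe_trans A \<subseteq> states A \<times> UNIV \<times> states A"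
  by (auto simp: is_automaton_def safe_trans_def)

lemma cob_no1: "is_cobuchi Sig A \<Longrightarrow> t \<in> safe_trans A \<Longrightarrow> 1 \<notin> col A t"
  by (auto simp: is_cobuchi_def is_gen_cobuchi_def safe_trans_def cobuchi_trans_def)

lemma cob_safeI: "is_cobuchi Sig A \<Longrightarrow> t \<in> trans A \<Longrightarrow> 1 \<notin> col A t \<Longrightarrow> t \<in> safe_trans A"
  by (auto simp: safe_trans_def cobuchi_trans_def)

theorem proposition21:
  fixes Sig :: "'a set"
    and L :: "(nat \<Rightarrow> 'a) set"
    and C :: "'c set"
    and B :: "('p, 'a, 'c set) automaton"
    and Amin :: "('q, 'a, nat set) automaton"
  assumes "L \<subseteq> omega_words Sig"
    and "prefix_independent Sig L"
    and "is_gen_cobuchi Sig C B"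
    and "history_deterministic Sig B"
    and "lang Sig B = L"
    and "is_cobuchi Sig Amin"
    and "history_deterministic Sig Amin"
    and "nice Sig Amin"
    and "safe_minimal Sig Amin"
    and "safe_centralised Sig Amin"
    and "lang Sig Amin = L"
  shows "Max (card ` safe_components Amin) \<le> card (states B)"
proof -
  note LO = assms(1) and pi = assms(2) and gB = assms(3) and lB = assms(5)
    and cA = assms(6) and smin = assms(9) and scen = assms(10) and lA = assms(11)
  have autB: "is_automaton Sig B" and accB: "acc B = gen_cobuchi_cond C" and finC: "finite C"
    using gB by (auto simp: is_gen_cobuchi_def)
  have autA: "is_automaton Sig Amin" and accA: "acc Amin = gen_cobuchi_cond {1}"
    using cA by (auto simp: is_cobuchi_def is_gen_cobuchi_def)
  obtain \<sigma>B where resB: "is_resolver Sig B \<sigma>B" using assms(4) by (auto simp: history_deterministic_def)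
  obtain \<sigma>A where resA: "is_resolver Sig Amin \<sigma>A" using assms(7) by (auto simp: history_deterministic_def)
  have reachA: "all_reachable Amin" and sd: "semantically_deterministic Sig Amin"
    and nf: "normal_form Amin" and sdet: "safe_deterministic Amin"
    using assms(8) by (auto simp: nice_def)
  have trA: "trans Amin \<subseteq> states Amin \<times> Sig \<times> states Amin" using autA by (simp add: is_automaton_def)
  have trB: "trans B \<subseteq> states B \<times> Sig \<times> states B" using autB by (simp add: is_automaton_def)
  have finA: "finite (states Amin)" and finB: "finite (states B)"
    using autA autB by (auto simp: is_automaton_def)
  have langq: "lang Sig (Amin\<lparr>init := q\<rparr>) = L" if "q \<in> states Amin" for q
  proof -
    have "(init Amin, q) \<in> (reachrel Amin)\<^sup>*"
      using reachA that by (simp add: all_reachable_def reachrel_def)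
    then show ?thesis by (rule lang_reach_eq[OF accA trA pi lA LO sd])
  qed
  have equiv: "equiv_states Sig Amin p q" if "p \<in> states Amin" "q \<in> states Amin" for p q
    using langq[OF that(1)] langq[OF that(2)] by (simp add: equiv_states_def)
  have SL: "safe_lang Sig Amin s = Collect (pathw (safe_trans Amin) s)" for s
    by (rule safe_lang_pathw[OF autA])
  have DSig: "safe_trans Amin \<subseteq> UNIV \<times> Sig \<times> UNIV" by (rule safe_trans_sig[OF autA])
  have Dst: "safe_trans Amin \<subseteq> states Amin \<times> UNIV \<times> states Amin" by (rule safe_trans_states[OF autA])
  have fincomp: "finite (card ` safe_components Amin)" using finA by (simp add: safe_components_def)
  have necomp: "card ` safe_components Amin \<noteq> {}"
    using autA by (auto simp: safe_components_def is_automaton_def)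
  obtain qm where qm: "qm \<in> states Amin" "Max (card ` safe_components Amin) = card (safe_scc Amin qm)"
    using Max_in[OF fincomp necomp] by (auto simp: safe_components_def)
  define S where "S = safe_scc Amin qm"
  have finS: "finite S" using finA scc_states[of Amin qm] finite_subset by (auto simp: S_def)
  have Sst: "S \<subseteq> states Amin" using scc_states by (simp add: S_def)
  have qmS: "qm \<in> S" using scc_self[OF qm(1)] by (simp add: S_def)
  have cardB: "card (states B) \<ge> 1"
    using finB autB by (auto simp: is_automaton_def Suc_le_eq card_gt_0_iff)
  show ?thesis
  proof (cases "card S \<le> 1")
    case True then show ?thesis using qm(2) cardB by (simp add: S_def)
  next
    case False
    then have two: "card (safe_scc Amin qm) \<ge> 2" by (simp add: S_def)
    have NE: "\<exists>z. pathw (safe_trans Amin) s z" if "s \<in> S" for s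
      using scc_nonempty_path[OF nf autA two] that by (simp add: S_def)
    have inS: "s' \<in> S" if "fpath (safe_trans Amin) s v s'" "s \<in> S" for s v s'
    proof -
      have "safe_scc Amin s' = safe_scc Amin s" by (rule fpath_scc[OF nf autA that(1)])
      moreover have "safe_scc Amin s = S" using scc_eq[of s Amin qm] that(2) by (simp add: S_def)
      moreover have "s' \<in> states Amin" using fpath_stays[OF that(1) Dst] that(2) Sst by blast
      ultimately show ?thesis using scc_self by metis
    qed
    have sccS: "safe_scc Amin s = S" if "s \<in> S" for s
      using scc_eq[of s Amin qm] that by (simp add: S_def)
    obtain z0 where z0: "pathw (safe_trans Amin) qm z0" using NE[OF qmS] by blast
    have hypF: "(\<lambda>i. col B (\<sigma>B (wprefix (Suc i) z))) \<in> gen_cobuchi_cond C"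
      if "pathw (safe_trans Amin) qm z" for z
    proof -
      have "z \<in> lang Sig (Amin\<lparr>init := qm\<rparr>)"
        by (rule pathw_lang[OF accA _ safe_trans_sub _ DSig that]) (auto dest: cob_no1[OF cA])
      then have "z \<in> lang Sig B" using langq[OF qm(1)] lB by simp
      moreover have "z \<in> omega_words Sig" using pathw_omega[OF that DSig] .
      ultimately show ?thesis using resB accB by (auto simp: is_resolver_def accepting_run_def)
    qed
    obtain u s1 c where c: "c \<in> C" and u: "fpath (safe_trans Amin) qm u s1"
      and stabF: "\<And>z i. pathw (safe_trans Amin) s1 z \<Longrightarrow> i \<ge> length u \<Longrightarrow>
            c \<notin> col B (\<sigma>B (wprefix (Suc i) (conc u z)))"
      using stabilise[OF finC hypF z0] by blast
    have s1S: "s1 \<in> S" using inS[OF u qmS] .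
    have uSig: "set u \<subseteq> Sig" using fpath_set[OF u DSig] .
    define P where "P = {p. \<exists>v s. fpath (safe_trans Amin) s1 v s \<and> p = stR B \<sigma>B (u @ v)}"
    define G where "G = {t \<in> trans B. c \<notin> col B t \<and> fst t \<in> P \<and> snd (snd t) \<in> P}"
    have GP: "G \<subseteq> P \<times> UNIV \<times> P" by (auto simp: G_def)
    have Gtr: "G \<subseteq> trans B" by (auto simp: G_def)
    have GSig: "G \<subseteq> UNIV \<times> Sig \<times> UNIV" using Gtr trB by auto
    have Pst: "p \<in> states B" if pP: "p \<in> P" for p
    proof -
      obtain v s where vs: "fpath (safe_trans Amin) s1 v s" "p = stR B \<sigma>B (u @ v)"
        using pP unfolding P_def by blast
      obtain z where z: "pathw (safe_trans Amin) s z" using NE[OF inS[OF vs(1) s1S]] by blast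
      have W: "conc (u @ v) z \<in> omega_words Sig"
        using conc_omega[OF _ pathw_omega[OF z DSig]] uSig fpath_set[OF vs(1) DSig] by simp
      show ?thesis using stR_state[OF autB resB W, of "length (u @ v)"] vs(2) unfolding wprefix_conc_len by simp
    qed
    have edge: "(stR B \<sigma>B (u @ v), a, stR B \<sigma>B (u @ v @ [a])) \<in> G"
      if v: "fpath (safe_trans Amin) s1 v s" and e: "(s, a, s') \<in> safe_trans Amin" for v s a s'
    proof -
      have v': "fpath (safe_trans Amin) s1 (v @ [a]) s'" using fpath_snoc[OF v e] .
      obtain z where z: "pathw (safe_trans Amin) s' z" using NE[OF inS[OF v' s1S]] by blast
      define x where "x = conc (v @ [a]) z"
      have x: "pathw (safe_trans Amin) s1 x" unfolding x_def by (rule pathw_conc[OF v' z])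
      define W where "W = conc u x"
      have Wo: "W \<in> omega_words Sig" unfolding W_def using conc_omega[OF uSig pathw_omega[OF x DSig]] .
      define i where "i = length u + length v"
      have W': "W = conc (u @ v @ [a]) z" by (simp add: W_def x_def conc_app)
      have p1: "wprefix i W = u @ v" unfolding W' i_def by (subst wprefix_conc_short) auto
      have p2: "wprefix (Suc i) W = u @ v @ [a]" unfolding W' i_def by (subst wprefix_conc_short) auto
      have p3: "W i = a" unfolding W' i_def by (simp add: conc_def nth_append)
      have rt: "\<sigma>B (wprefix (Suc i) W) = (stR B \<sigma>B (u @ v), a, stR B \<sigma>B (u @ v @ [a]))
           \<and> \<sigma>B (wprefix (Suc i) W) \<in> trans B"
        using res_trans[OF resB Wo, of i] unfolding p1 p2 p3 by metis
      have cc: "c \<notin> col B (\<sigma>B (wprefix (Suc i) W))"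
        unfolding W_def by (rule stabF[OF x]) (simp add: i_def)
      have "stR B \<sigma>B (u @ v) \<in> P" using v by (auto simp: P_def)
      moreover have "stR B \<sigma>B (u @ v @ [a]) \<in> P" using v' unfolding P_def by force
      ultimately show ?thesis using rt cc by (auto simp: G_def)
    qed
    have relF: "fpath G (stR B \<sigma>B (u @ v)) v' (stR B \<sigma>B (u @ v @ v'))"
      if "fpath (safe_trans Amin) s v' s'" "fpath (safe_trans Amin) s1 v s" for s v' s' v
      using that
    proof (induction arbitrary: v rule: fpath.induct)
      case (fp_nil n) then show ?case by (simp add: fpath.intros)
    next
      case (fp_cons n a n' y m)
      have e: "(stR B \<sigma>B (u @ v), a, stR B \<sigma>B (u @ v @ [a])) \<in> G" by (rule edge[OF fp_cons.prems fp_cons(1)])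
      have "fpath G (stR B \<sigma>B (u @ (v @ [a]))) y (stR B \<sigma>B (u @ (v @ [a]) @ y))"
        by (rule fp_cons.IH) (rule fpath_snoc[OF fp_cons.prems fp_cons(1)])
      then show ?case using e by (auto intro: fpath.intros)
    qed
    have relI: "pathw G (stR B \<sigma>B (u @ v)) z"
      if v: "fpath (safe_trans Amin) s1 v s" and z: "pathw (safe_trans Amin) s z" for v s z
    proof -
      obtain ns where ns: "ns 0 = s" "\<forall>i. (ns i, z i, ns (Suc i)) \<in> safe_trans Amin"
        using z by (auto simp: pathw_def)
      have "(stR B \<sigma>B (u @ v @ wprefix i z), z i, stR B \<sigma>B (u @ v @ wprefix (Suc i) z)) \<in> G" for i
      proof -
        have "fpath (safe_trans Amin) s (wprefix i z) (ns i)"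
          using fpath_of_seq[OF ns(2), of 0 i] ns(1) by (simp add: wprefix_def)
        then have "fpath (safe_trans Amin) s1 (v @ wprefix i z) (ns i)" by (rule fpath_append[OF v])
        from edge[OF this ns(2)[rule_format, of i]] show ?thesis by (simp add: wprefix_Suc)
      qed
      then show ?thesis unfolding pathw_def
        by (intro exI[of _ "\<lambda>i. stR B \<sigma>B (u @ v @ wprefix i z)"]) simp
    qed
    define p0 where "p0 = stR B \<sigma>B u"
    have p0P: "p0 \<in> P" unfolding P_def p0_def using fp_nil by force
    obtain zz where zz: "pathw (safe_trans Amin) s1 zz" using NE[OF s1S] by blast
    have ne0: "pathw G p0 zz" using relI[OF fp_nil zz] by (simp add: p0_def)
    have hypR: "(\<lambda>i. col Amin (\<sigma>A (u @ wprefix (Suc i) z))) \<in> gen_cobuchi_cond {1}"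
      if z: "pathw G p0 z" for z
    proof -
      have zo: "z \<in> omega_words Sig" using pathw_omega[OF z GSig] .
      define W where "W = conc u z"
      have Wo: "W \<in> omega_words Sig" unfolding W_def by (rule conc_omega[OF uSig zo])
      have zl: "z \<in> lang Sig (B\<lparr>init := p0\<rparr>)"
        by (rule pathw_lang[OF accB c Gtr _ GSig z]) (auto simp: G_def)
      have "(init B, stR B \<sigma>B (wprefix (length u) W)) \<in> (reachrel B)\<^sup>*" by (rule stR_reach[OF resB Wo])
      then have "(init B, p0) \<in> (reachrel B)\<^sup>*" by (simp add: W_def p0_def)
      from lang_reach_sub[OF accB trB pi _ this] lB zl have "z \<in> L" by blast
      then have "W \<in> L" using pi uSig zo by (simp add: prefix_independent_def W_def)
      then have "W \<in> lang Sig Amin" using lA by simp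
      then have acW: "(\<lambda>i. col Amin (\<sigma>A (wprefix (Suc i) W))) \<in> gen_cobuchi_cond {1}"
        using resA Wo accA by (auto simp: is_resolver_def accepting_run_def)
      have eq: "wprefix (Suc (i + length u)) W = u @ wprefix (Suc i) z" for i
      proof -
        have "Suc (i + length u) = length u + Suc i" by simp
        then show ?thesis unfolding W_def by (simp only: wprefix_conc_long)
      qed
      from gcc_shift[OF acW, of "length u"] show ?thesis by (simp only: eq)
    qed
    obtain y p1 j where j: "j \<in> {1::nat}" and y: "fpath G p0 y p1"
      and stabR0: "\<forall>z. pathw G p1 z \<longrightarrow> (\<forall>i\<ge>length y. j \<notin> col Amin (\<sigma>A (u @ wprefix (Suc i) (conc y z))))"
      using stabilise[OF _ hypR ne0] by blast
    have stabR: "1 \<notin> col Amin (\<sigma>A (u @ wprefix (Suc i) (conc y z)))"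
      if "pathw G p1 z" "i \<ge> length y" for z i
      using stabR0 that j by auto
    have ySig: "set y \<subseteq> Sig" using fpath_set[OF y GSig] .
    have p1P: "p1 \<in> P" using fpath_stays[OF y GP p0P] .
    obtain v1 s' where v1: "fpath (safe_trans Amin) s1 v1 s'" and p1: "p1 = stR B \<sigma>B (u @ v1)"
      using p1P unfolding P_def by blast
    have s'S: "s' \<in> S" using inS[OF v1 s1S] .
    have revsafe: "pathw (safe_trans Amin) (stR Amin \<sigma>A (u @ y @ t)) z"
      if t: "fpath G p1 t p" and z: "pathw G p z" for t p z
    proof -
      define x where "x = conc t z"
      have x: "pathw G p1 x" unfolding x_def by (rule pathw_conc[OF t z])
      have tSig: "set t \<subseteq> Sig" using fpath_set[OF t GSig] .
      define W where "W = conc (u @ y @ t) z"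
      have Wo: "W \<in> omega_words Sig" unfolding W_def
        using conc_omega[OF _ pathw_omega[OF z GSig]] uSig ySig tSig by simp
      have "(stR Amin \<sigma>A (u @ y @ t @ wprefix i z), z i, stR Amin \<sigma>A (u @ y @ t @ wprefix (Suc i) z))
             \<in> safe_trans Amin" for i
      proof -
        define k where "k = length (u @ y @ t) + i"
        have q1: "wprefix k W = u @ y @ t @ wprefix i z" unfolding W_def k_def
          by (simp only: wprefix_conc_long) simp
        have q2: "wprefix (Suc k) W = u @ y @ t @ wprefix (Suc i) z" unfolding W_def k_def
          by (simp only: add_Suc_right[symmetric] wprefix_conc_long) simp
        have q3: "W k = z i" unfolding W_def k_def by (simp add: conc_def)
        have rt: "\<sigma>A (wprefix (Suc k) W) = (stR Amin \<sigma>A (u @ y @ t @ wprefix i z), z i, stR Amin \<sigma>A (u @ y @ t @ wprefix (Suc i) z))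
             \<and> \<sigma>A (wprefix (Suc k) W) \<in> trans Amin"
          using res_trans[OF resA Wo, of k] unfolding q1 q2 q3 by metis
        have "wprefix (Suc (length y + length t + i)) (conc y x) = y @ t @ wprefix (Suc i) z"
        proof -
          have "wprefix (Suc (length y + length t + i)) (conc y x) = wprefix (length y + Suc (length t + i)) (conc y x)"
            by (simp add: add.assoc)
          also have "\<dots> = y @ wprefix (Suc (length t + i)) x" by (rule wprefix_conc_long)
          also have "wprefix (Suc (length t + i)) x = wprefix (length t + Suc i) (conc t z)"
            by (simp add: x_def)
          also have "\<dots> = t @ wprefix (Suc i) z" by (rule wprefix_conc_long)
          finally show ?thesis .
        qed
        moreover have "1 \<notin> col Amin (\<sigma>A (u @ wprefix (Suc (length y + length t + i)) (conc y x)))"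
          by (rule stabR[OF x]) simp
        ultimately have "1 \<notin> col Amin (\<sigma>A (wprefix (Suc k) W))" using q2 by simp
        then have "\<sigma>A (wprefix (Suc k) W) \<in> safe_trans Amin" using rt cob_safeI[OF cA] by blast
        then show ?thesis using rt by simp
      qed
      then show ?thesis unfolding pathw_def
        by (intro exI[of _ "\<lambda>i. stR Amin \<sigma>A (u @ y @ t @ wprefix i z)"]) simp
    qed
    have "finite (safe_lang Sig Amin ` S)" "safe_lang Sig Amin ` S \<noteq> {}" using finS qmS by auto
    from finite_has_maximal[OF this] obtain sm where sm: "sm \<in> S"
      and smax: "\<And>t. t \<in> S \<Longrightarrow> safe_lang Sig Amin sm \<subseteq> safe_lang Sig Amin t \<Longrightarrow>
                   safe_lang Sig Amin sm = safe_lang Sig Amin t"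
      by auto
    obtain v' where v': "fpath (safe_trans Amin) s' v' sm"
      using scc_connect[of s' Amin qm sm] s'S sm by (auto simp: S_def)
    have vv: "fpath (safe_trans Amin) s1 (v1 @ v') sm" by (rule fpath_append[OF v1 v'])
    define ps where "ps = stR B \<sigma>B (u @ v1 @ v')"
    have gv': "fpath G p1 v' ps" using relF[OF v' v1] by (simp add: p1 ps_def)
    define rs where "rs = stR Amin \<sigma>A (u @ y @ v')"
    have sub: "pathw (safe_trans Amin) rs z" if "pathw (safe_trans Amin) sm z" for z
    proof -
      have "pathw G ps z" using relI[OF vv that] by (simp add: ps_def)
      then show ?thesis unfolding rs_def by (rule revsafe[OF gv'])
    qed
    have rsst: "rs \<in> states Amin"
    proof -
      obtain z where z: "pathw (safe_trans Amin) sm z" using NE[OF sm] by blast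
      have "pathw G ps z" using relI[OF vv z] by (simp add: ps_def)
      then have zo: "z \<in> omega_words Sig" using pathw_omega[OF _ GSig] by blast
      have W: "conc (u @ y @ v') z \<in> omega_words Sig"
        using conc_omega[OF _ zo] uSig ySig fpath_set[OF v' DSig] by simp
      show ?thesis using stR_state[OF autA resA W, of "length (u @ y @ v')"] unfolding wprefix_conc_len by (simp add: rs_def)
    qed
    have smst: "sm \<in> states Amin" using sm Sst by blast
    have incl: "safe_lang Sig Amin sm \<subseteq> safe_lang Sig Amin rs" using sub by (auto simp: SL)
    have "safe_scc Amin sm = safe_scc Amin rs"
      using scen smst rsst equiv[OF smst rsst] incl unfolding safe_centralised_def by simp
    then have rsS: "rs \<in> S" using sccS[OF sm] scc_self[OF rsst] by simp
    have "safe_lang Sig Amin sm = safe_lang Sig Amin rs" using smax[OF rsS incl] .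
    then have rs_sm: "rs = sm"
      using smin smst rsst equiv[OF smst rsst] unfolding safe_minimal_def by (metis (no_types))
    define vv' where "vv' s'' = (SOME v. fpath (safe_trans Amin) sm v s'')" for s''
    have vv': "fpath (safe_trans Amin) sm (vv' s'') s''" if "s'' \<in> S" for s''
    proof -
      have "\<exists>v. fpath (safe_trans Amin) sm v s''" using scc_connect[of sm Amin qm s''] sm that by (simp add: S_def)
      then show ?thesis unfolding vv'_def by (rule someI_ex)
    qed
    define g where "g s'' = stR B \<sigma>B (u @ v1 @ v' @ vv' s'')" for s''
    have geq: "safe_lang Sig Amin s'' = Collect (pathw G (g s''))" if s'': "s'' \<in> S" for s''
    proof -
      have f1: "fpath (safe_trans Amin) s1 ((v1 @ v') @ vv' s'') s''" by (rule fpath_append[OF vv vv'[OF s'']])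
      have f2: "fpath G ps (vv' s'') (g s'')"
        using relF[OF vv'[OF s''] vv] by (simp add: ps_def g_def)
      show ?thesis unfolding SL
      proof (intro equalityI subsetI; simp)
        fix z assume "pathw (safe_trans Amin) s'' z"
        then show "pathw G (g s'') z" using relI[OF f1] by (simp add: g_def)
      next
        fix z assume z: "pathw G (g s'') z"
        have "pathw G ps (conc (vv' s'') z)" by (rule pathw_conc[OF f2 z])
        then have "pathw (safe_trans Amin) rs (conc (vv' s'') z)" unfolding rs_def by (rule revsafe[OF gv'])
        then have "pathw (safe_trans Amin) sm (conc (vv' s'') z)" using rs_sm by simp
        then show "pathw (safe_trans Amin) s'' z" by (rule safe_det_split[OF sdet vv'[OF s'']])
      qed
    qed
    have inj: "inj_on g S"
    proof (rule inj_onI)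
      fix a b assume a: "a \<in> S" and b: "b \<in> S" and gab: "g a = g b"
      have "safe_lang Sig Amin a = safe_lang Sig Amin b" using geq[OF a] geq[OF b] gab by simp
      moreover have "a \<in> states Amin" "b \<in> states Amin" using a b Sst by auto
      ultimately show "a = b" using smin equiv unfolding safe_minimal_def by simp
    qed
    have gst: "g ` S \<subseteq> states B"
    proof
      fix p assume "p \<in> g ` S"
      then obtain s'' where s'': "s'' \<in> S" "p = g s''" by blast
      have "fpath (safe_trans Amin) s1 (v1 @ v' @ vv' s'') s''"
        using fpath_append[OF vv vv'[OF s''(1)]] by simp
      then have "p \<in> P" unfolding P_def g_def s''(2) by blast
      then show "p \<in> states B" by (rule Pst)
    qed
    have "card S \<le> card (states B)" by (rule card_inj_on_le[OF inj gst finB])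
    then show ?thesis using qm(2) by (simp add: S_def)
  qed
qed

end
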